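(* Let $X$ be a shift space, $k\in\mathbb{N}$, and $\mathcal{C}=(C_n)_{n\in\mathbb{N}}$ with $C_n\subseteq\mathcal{L}(X,[1,nk]^d)$ a collection with entropy $h(\mathcal{C})>0$. Let $r\in\mathbb{N}$. Then there is a collection $\mathcal{C}'=(C_n')_{n\in\mathbb{N}}$ with $C_n'\subseteq C_n$ such that $h(\mathcal{C}')=h(\mathcal{C})$ and for all $n$, all $a\in C_n'$ and all $\gamma\in[-r,r]^d\setminus\{\bar 0\}$, $a$ clashes with $\sigma^\gamma(a)$.
   Context: $X\subseteq\mathcal{A}^{\mathbb{Z}^d}$ is closed and shift-invariant ($\mathcal{A}$ finite); $\mathcal{L}(X,B)=\{x|_B:x\in X\}$. For a pattern $a$ on $B$, $\sigma^\gamma(a)$ is the pattern on $B-\gamma$ given by $(\sigma^\gamma a)_\delta=a_{\gamma+\delta}$. Patterns $a,b$ clash if some site $\gamma$ in both domains has $a_\gamma\ne b_\gamma$. The entropy of $\mathcal{C}=(C_n)$ is $h(\mathcal{C})=\liminf_{n\to\infty}(nk)^{-d}\log|C_n|$. *)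

theory Defs
  imports "HOL-Analysis.Analysis" "HOL-Library.Extended_Real" "HOL-Library.Liminf_Limsup"
begin

text \<open>Sites of Z^d are vectors int^'d (d = CARD('d)); configurations over alphabet A are
functions from sites to A; patterns are partial maps whose domain is the shape B.\<close>

definition shift_space :: "'a set \<Rightarrow> ((int^'d) \<Rightarrow> 'a) set \<Rightarrow> bool" where
  "shift_space A X \<longleftrightarrow> finite A \<and>
     closedin (product_topology (\<lambda>_. discrete_topology A) UNIV) X \<and>
     (\<forall>x\<in>X. \<forall>\<gamma>. (\<lambda>\<delta>. x (\<gamma> + \<delta>)) \<in> X)"

definition restr_pat :: "((int^'d) \<Rightarrow> 'a) \<Rightarrow> (int^'d) set \<Rightarrow> ((int^'d) \<rightharpoonup> 'a)" where
  "restr_pat x B = (\<lambda>\<delta>. if \<delta> \<in> B then Some (x \<delta>) else None)"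

definition lang :: "((int^'d) \<Rightarrow> 'a) set \<Rightarrow> (int^'d) set \<Rightarrow> ((int^'d) \<rightharpoonup> 'a) set" where
  "lang X B = {restr_pat x B | x. x \<in> X}"

definition pat_shift :: "int^'d \<Rightarrow> ((int^'d) \<rightharpoonup> 'a) \<Rightarrow> ((int^'d) \<rightharpoonup> 'a)" where
  "pat_shift \<gamma> a = (\<lambda>\<delta>. a (\<gamma> + \<delta>))"

definition clash :: "((int^'d) \<rightharpoonup> 'a) \<Rightarrow> ((int^'d) \<rightharpoonup> 'a) \<Rightarrow> bool" where
  "clash a b \<longleftrightarrow> (\<exists>\<gamma>\<in>dom a \<inter> dom b. a \<gamma> \<noteq> b \<gamma>)"

definition cube :: "int \<Rightarrow> int \<Rightarrow> (int^'d) set" where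
  "cube lo hi = {v. \<forall>i. lo \<le> v$i \<and> v$i \<le> hi}"

definition coll_entropy :: "nat \<Rightarrow> (nat \<Rightarrow> ((int^'d) \<rightharpoonup> 'a) set) \<Rightarrow> ereal" where
  "coll_entropy k C = liminf (\<lambda>n. if C n = {} then (-\<infinity>)
      else ereal (ln (real (card (C n))) / (real (n * k)) ^ CARD('d)))"

end

theory Submission
  imports Defs
begin

lemma cube_eq: "(cube lo hi :: (int^'d) set) = vec_lambda ` (PiE UNIV (\<lambda>_. {lo..hi}))"
proof
  show "(cube lo hi :: (int^'d) set) \<subseteq> vec_lambda ` (PiE UNIV (\<lambda>_. {lo..hi}))"
  proof
    fix v :: "int^'d" assume "v \<in> cube lo hi"
    then have "(\<lambda>i. v$i) \<in> PiE UNIV (\<lambda>_. {lo..hi})" by (auto simp: cube_def)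
    moreover have "v = vec_lambda (\<lambda>i. v$i)" by simp
    ultimately show "v \<in> vec_lambda ` (PiE UNIV (\<lambda>_. {lo..hi}))"
      by blast
  qed
qed (auto simp: cube_def)

lemma card_cube: "card (cube lo hi :: (int^'d) set) = nat (hi - lo + 1) ^ CARD('d)"
proof -
  have "inj_on vec_lambda (PiE UNIV (\<lambda>_::'d. {lo..hi}))"
    by (auto intro: inj_onI)
  then have "card (cube lo hi :: (int^'d) set) = card (PiE UNIV (\<lambda>_::'d. {lo..hi}))"
    by (simp add: cube_eq card_image)
  also have "\<dots> = nat (hi - lo + 1) ^ CARD('d)"
    by (simp add: card_PiE)
  finally show ?thesis .
qed

lemma finite_cube: "finite (cube lo hi :: (int^'d) set)"
  by (simp add: cube_eq finite_PiE)

definition Pat :: "'a set \<Rightarrow> (int^'d) set \<Rightarrow> ((int^'d) \<rightharpoonup> 'a) set" where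
  "Pat A B = {restr_pat x B | x. \<forall>\<delta>. x \<delta> \<in> A}"

lemma Pat_fin_card:
  assumes "finite A" "finite B"
  shows "finite (Pat A B) \<and> card (Pat A B) \<le> card A ^ card B"
proof -
  have sub: "Pat A B \<subseteq> (\<lambda>f. restr_pat f B) ` PiE B (\<lambda>_. A)"
  proof
    fix a assume "a \<in> Pat A B"
    then obtain x where x: "a = restr_pat x B" "\<forall>\<delta>. x \<delta> \<in> A" by (auto simp: Pat_def)
    have "a = restr_pat (restrict x B) B" using x by (auto simp: restr_pat_def)
    moreover have "restrict x B \<in> PiE B (\<lambda>_. A)" using x by auto
    ultimately show "a \<in> (\<lambda>f. restr_pat f B) ` PiE B (\<lambda>_. A)" by blast
  qed
  have fin: "finite (PiE B (\<lambda>_. A))" using assms by (simp add: finite_PiE)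
  have "card (Pat A B) \<le> card ((\<lambda>f. restr_pat f B) ` PiE B (\<lambda>_. A))"
    using sub fin by (intro card_mono) auto
  also have "\<dots> \<le> card (PiE B (\<lambda>_. A))" by (rule card_image_le[OF fin])
  also have "\<dots> = card A ^ card B" using assms by (simp add: card_PiE)
  finally show ?thesis using sub fin finite_subset by blast
qed

lemma not_clash_iff:
  "\<not> clash (restr_pat x B) (pat_shift \<gamma> (restr_pat x B)) \<longleftrightarrow>
     (\<forall>\<delta>. \<delta> \<in> B \<and> \<gamma> + \<delta> \<in> B \<longrightarrow> x \<delta> = x (\<gamma> + \<delta>))"
  unfolding clash_def pat_shift_def restr_pat_def dom_def by auto

lemma bad_inj:
  fixes x y :: "int^'d \<Rightarrow> 'a" and N :: int and r :: nat and \<gamma> :: "int^'d"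
  assumes g: "\<gamma> \<in> cube (- int r) (int r)" "\<gamma> \<noteq> 0"
    and px: "\<forall>\<delta>. \<delta> \<in> cube 1 N \<and> \<gamma> + \<delta> \<in> cube 1 N \<longrightarrow> x \<delta> = x (\<gamma> + \<delta>)"
    and py: "\<forall>\<delta>. \<delta> \<in> cube 1 N \<and> \<gamma> + \<delta> \<in> cube 1 N \<longrightarrow> y \<delta> = y (\<gamma> + \<delta>)"
    and agree: "\<forall>\<delta> \<in> cube 1 N - cube (int r + 1) (N - int r). x \<delta> = y \<delta>"
  shows "\<forall>\<delta> \<in> cube 1 N. x \<delta> = y \<delta>"
proof -
  obtain i where i: "\<gamma>$i \<noteq> 0" using g(2) by (metis vec_eq_iff zero_index)
  define s where "s = sgn (\<gamma>$i)"
  have sg: "s * \<gamma>$i = \<bar>\<gamma>$i\<bar>" unfolding s_def by (simp add: abs_sgn mult.commute)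
  have pos: "\<bar>\<gamma>$i\<bar> > 0" using i by simp
  have "\<forall>\<delta>. nat (N + 1 - s * \<delta>$i) = m \<longrightarrow> \<delta> \<in> cube 1 N \<longrightarrow> x \<delta> = y \<delta>" for m
  proof (induction m rule: less_induct)
    case (less m)
    show ?case
    proof (intro allI impI)
      fix \<delta> :: "int^'d" assume m: "nat (N + 1 - s * \<delta>$i) = m" and d: "\<delta> \<in> cube 1 N"
      show "x \<delta> = y \<delta>"
      proof (cases "\<delta> \<in> cube (int r + 1) (N - int r)")
        case False then show ?thesis using agree d by blast
      next
        case True
        have gd: "\<gamma> + \<delta> \<in> cube 1 N"
          using True g(1) unfolding cube_def
          by (auto simp: vector_add_component) (smt (verit))+
        have "1 \<le> \<delta>$i \<and> \<delta>$i \<le> N" using d unfolding cube_def by auto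
        then have sb: "\<bar>s * \<delta>$i\<bar> \<le> N" unfolding s_def
          by (auto simp: abs_mult sgn_if)
        have lt: "nat (N + 1 - s * (\<gamma> + \<delta>)$i) < m"
          using m sb sg pos by (simp add: vector_add_component algebra_simps)
        have "y (\<gamma> + \<delta>) = x (\<gamma> + \<delta>)"
          using less.IH[OF lt] gd by auto
        then show ?thesis using px py d gd by metis
      qed
    qed
  qed
  then show ?thesis by blast
qed

lemma pow_diff_le:
  fixes x y :: real
  assumes "0 \<le> y" "y \<le> x"
  shows "x ^ Suc m - y ^ Suc m \<le> real (Suc m) * (x - y) * x ^ m"
proof (induction m)
  case 0 then show ?case by simp
next
  case (Suc m)
  have "x ^ Suc (Suc m) - y ^ Suc (Suc m) = x * (x ^ Suc m - y ^ Suc m) + (x - y) * y ^ Suc m"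
    by (simp add: algebra_simps)
  also have "\<dots> \<le> x * (real (Suc m) * (x - y) * x ^ m) + (x - y) * x ^ Suc m"
    using Suc assms by (intro add_mono mult_left_mono mult_left_mono power_mono) auto
  also have "\<dots> = real (Suc (Suc m)) * (x - y) * x ^ Suc m"
    by (simp add: algebra_simps)
  finally show ?case .
qed

lemma bad_card:
  fixes Cn :: "((int^'d) \<rightharpoonup> 'a) set" and N :: int
  assumes A: "finite A" and g: "\<gamma> \<in> cube (- int r) (int r)" "\<gamma> \<noteq> 0"
    and sub: "Cn \<subseteq> Pat A (cube 1 N)"
  shows "card {a\<in>Cn. \<not> clash a (pat_shift \<gamma> a)}
           \<le> card A ^ card (cube 1 N - cube (int r + 1) (N - int r) :: (int^'d) set)"
proof -
  define S :: "(int^'d) set" where "S = cube 1 N - cube (int r + 1) (N - int r)"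
  define Bd where "Bd = {a\<in>Cn. \<not> clash a (pat_shift \<gamma> a)}"
  have finS: "finite S" unfolding S_def using finite_cube by blast
  have inj: "inj_on (\<lambda>a. a |` S) Bd"
  proof (rule inj_onI)
    fix a b assume a: "a \<in> Bd" and b: "b \<in> Bd" and eq: "a |` S = b |` S"
    obtain x where x: "a = restr_pat x (cube 1 N)" using a sub unfolding Bd_def Pat_def by blast
    obtain y where y: "b = restr_pat y (cube 1 N)" using b sub unfolding Bd_def Pat_def by blast
    have "\<not> clash (restr_pat x (cube 1 N)) (pat_shift \<gamma> (restr_pat x (cube 1 N)))"
      using a x unfolding Bd_def by simp
    then have px: "\<forall>\<delta>. \<delta> \<in> cube 1 N \<and> \<gamma> + \<delta> \<in> cube 1 N \<longrightarrow> x \<delta> = x (\<gamma> + \<delta>)"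
      unfolding not_clash_iff .
    have "\<not> clash (restr_pat y (cube 1 N)) (pat_shift \<gamma> (restr_pat y (cube 1 N)))"
      using b y unfolding Bd_def by simp
    then have py: "\<forall>\<delta>. \<delta> \<in> cube 1 N \<and> \<gamma> + \<delta> \<in> cube 1 N \<longrightarrow> y \<delta> = y (\<gamma> + \<delta>)"
      unfolding not_clash_iff .
    have ag: "\<forall>\<delta> \<in> (cube 1 N - cube (int r + 1) (N - int r) :: (int^'d) set). x \<delta> = y \<delta>"
    proof
      fix \<delta> :: "int^'d" assume d: "\<delta> \<in> cube 1 N - cube (int r + 1) (N - int r)"
      have "(a |` S) \<delta> = (b |` S) \<delta>" using eq by simp
      then show "x \<delta> = y \<delta>" using d x y unfolding S_def restr_pat_def by simp
    qed
    have "\<forall>\<delta> \<in> cube 1 N. x \<delta> = y \<delta>" by (rule bad_inj[OF g px py ag])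
    then show "a = b" using x y by (auto simp: restr_pat_def)
  qed
  have img: "(\<lambda>a. a |` S) ` Bd \<subseteq> Pat A S"
  proof
    fix c assume "c \<in> (\<lambda>a. a |` S) ` Bd"
    then obtain a where a: "a \<in> Bd" "c = a |` S" by blast
    obtain x where x: "a = restr_pat x (cube 1 N)" "\<forall>\<delta>. x \<delta> \<in> A"
      using a sub unfolding Bd_def Pat_def by blast
    have "c = restr_pat x S" using a(2) x(1) unfolding S_def restr_pat_def restrict_map_def
      by (intro ext) simp
    then show "c \<in> Pat A S" using x(2) unfolding Pat_def by blast
  qed
  have "card Bd = card ((\<lambda>a. a |` S) ` Bd)" using inj by (simp add: card_image)
  also have "\<dots> \<le> card (Pat A S)" using img Pat_fin_card[OF A finS] by (intro card_mono) auto
  also have "\<dots> \<le> card A ^ card S" using Pat_fin_card[OF A finS] by blast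
  finally show ?thesis unfolding Bd_def S_def .
qed

lemma core:
  fixes c c' b N T h h1 K0 K1 :: real
  assumes "c - b \<le> c'" "exp (h1 * (N * T)) < c" "2 * b \<le> exp (K0 + K1 * T)"
    "0 \<le> K0" "0 \<le> K1" "1 \<le> T" "0 < h" "h < h1"
    "(K0 + K1) / h1 \<le> N" "ln 2 / (h1 - h) \<le> N"
  shows "exp (h * (N * T)) < c'"
proof -
  have h1: "0 < h1" using assms by linarith
  have "0 \<le> (K0 + K1) / h1" using assms(4,5) h1 by simp
  then have N0: "0 \<le> N" using assms(9) by linarith
  have "K0 * 1 \<le> K0 * T" by (rule mult_left_mono[OF assms(6) assms(4)])
  then have "K0 + K1 * T \<le> (K0 + K1) * T" by (simp add: algebra_simps)
  also have "K0 + K1 \<le> h1 * N" using assms(9) h1 by (simp add: pos_divide_le_eq mult.commute)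
  then have "(K0 + K1) * T \<le> (h1 * N) * T" using assms(6) by (intro mult_right_mono) auto
  finally have "K0 + K1 * T \<le> h1 * (N * T)" by (simp add: mult.assoc)
  then have "exp (K0 + K1 * T) \<le> exp (h1 * (N * T))" by simp
  then have b2: "2 * b \<le> exp (h1 * (N * T))" using assms(3) by linarith
  have hh: "0 < h1 - h" using assms(8) by simp
  have l2: "ln 2 \<le> (h1 - h) * N" using assms(10) hh by (simp add: pos_divide_le_eq mult.commute)
  have "(h1 - h) * N * 1 \<le> (h1 - h) * N * T" using assms(6) hh N0
    by (intro mult_left_mono) auto
  with l2 have "ln 2 \<le> (h1 - h) * N * T" by simp
  then have "ln 2 + h * (N * T) \<le> h1 * (N * T)" by (simp add: algebra_simps)
  then have "exp (ln 2 + h * (N * T)) \<le> exp (h1 * (N * T))" by simp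
  then have "2 * exp (h * (N * T)) \<le> exp (h1 * (N * T))" by (simp add: exp_add)
  then show ?thesis using assms(1,2) b2 by linarith
qed

theorem lemma8p2:
  fixes A :: "'a set" and X :: "((int^'d) \<Rightarrow> 'a) set"
    and C :: "nat \<Rightarrow> ((int^'d) \<rightharpoonup> 'a) set" and k r :: nat
  assumes "shift_space A X"
    and "k \<ge> 1"
    and "\<And>n. C n \<subseteq> lang X (cube 1 (int (n * k)) :: (int^'d) set)"
    and "coll_entropy k C > 0"
  shows "\<exists>C' :: nat \<Rightarrow> ((int^'d) \<rightharpoonup> 'a) set.
           (\<forall>n. C' n \<subseteq> C n) \<and> coll_entropy k C' = coll_entropy k C \<and>
           (\<forall>n. \<forall>a\<in>C' n. \<forall>\<gamma>\<in>(cube (- int r) (int r) :: (int^'d) set) - {0}.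
               clash a (pat_shift \<gamma> a))"
proof -
  have finA: "finite A" using assms(1) unfolding shift_space_def by blast
  have "X \<subseteq> topspace (product_topology (\<lambda>_. discrete_topology A) UNIV)"
    using assms(1) unfolding shift_space_def by (blast dest: closedin_subset)
  then have XA: "\<forall>x\<in>X. \<forall>\<delta>. x \<delta> \<in> A" by (auto simp: PiE_iff)
  have langP: "lang X B \<subseteq> Pat A B" for B
    unfolding lang_def Pat_def using XA by blast
  define D where "D = CARD('d)"
  have D1: "D \<ge> 1" unfolding D_def by (simp add: Suc_leI)
  define G where "G = (cube (- int r) (int r) :: (int^'d) set) - {0}"
  define S where "S n = (cube 1 (int (n*k)) - cube (int r + 1) (int (n*k) - int r) :: (int^'d) set)" for n
  define C' where "C' n = {a\<in>C n. \<forall>\<gamma>\<in>G. clash a (pat_shift \<gamma> a)}" for n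
  have CP: "C n \<subseteq> Pat A (cube 1 (int (n*k)))" for n using assms(3) langP by blast
  have finC: "finite (C n)" for n
    using CP Pat_fin_card[OF finA finite_cube] finite_subset by blast
  have subC: "C' n \<subseteq> C n" for n unfolding C'_def by blast
  have finG: "finite G" unfolding G_def using finite_cube by blast
  have bad: "card (C n) \<le> card (C' n) + card G * card A ^ card (S n)" for n
  proof -
    define Bd where "Bd \<gamma> = {a\<in>C n. \<not> clash a (pat_shift \<gamma> a)}" for \<gamma>
    have "C n \<subseteq> C' n \<union> (\<Union>\<gamma>\<in>G. Bd \<gamma>)" unfolding C'_def Bd_def by blast
    moreover have "finite (C' n \<union> (\<Union>\<gamma>\<in>G. Bd \<gamma>))"
      by (rule finite_subset[OF _ finC[of n]]) (auto simp: C'_def Bd_def)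
    ultimately have "card (C n) \<le> card (C' n \<union> (\<Union>\<gamma>\<in>G. Bd \<gamma>))"
      by (intro card_mono)
    also have "\<dots> \<le> card (C' n) + card (\<Union>\<gamma>\<in>G. Bd \<gamma>)" by (rule card_Un_le)
    also have "card (\<Union>\<gamma>\<in>G. Bd \<gamma>) \<le> (\<Sum>\<gamma>\<in>G. card (Bd \<gamma>))" by (rule card_UN_le[OF finG])
    also have "\<dots> \<le> (\<Sum>\<gamma>\<in>G. card A ^ card (S n))"
    proof (rule sum_mono)
      fix \<gamma> assume "\<gamma> \<in> G"
      then show "card (Bd \<gamma>) \<le> card A ^ card (S n)"
        unfolding Bd_def S_def G_def using bad_card[OF finA _ _ CP] by blast
    qed
    also have "\<dots> = card G * card A ^ card (S n)" by simp
    finally show ?thesis by simp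
  qed
  have cardS: "real (card (S n)) \<le> real D * (2 * real r) * real (n*k) ^ (D - 1)"
    if "2 * r \<le> n * k" for n
  proof -
    have inner: "(cube (int r + 1) (int (n*k) - int r) :: (int^'d) set) \<subseteq> cube 1 (int (n*k))"
    proof (rule subsetI)
      fix v :: "int^'d" assume "v \<in> cube (int r + 1) (int (n*k) - int r)"
      then have hv: "\<And>i. int r + 1 \<le> v$i \<and> v$i \<le> int (n*k) - int r"
        unfolding cube_def by blast
      show "v \<in> cube 1 (int (n*k))" unfolding cube_def mem_Collect_eq
      proof
        fix i show "1 \<le> v$i \<and> v$i \<le> int (n*k)" using hv[of i] by linarith
      qed
    qed
    have "card (S n) = card (cube 1 (int (n*k)) :: (int^'d) set)
        - card (cube (int r + 1) (int (n*k) - int r) :: (int^'d) set)"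
      unfolding S_def by (rule card_Diff_subset[OF finite_cube inner])
    also have "\<dots> = (n*k) ^ D - (n*k - 2*r) ^ D"
    proof -
      have e1: "nat (int (n*k) - 1 + 1) = n*k" by arith
      have e2: "nat (int (n*k) - int r - (int r + 1) + 1) = n*k - 2*r" by arith
      show ?thesis unfolding card_cube D_def e1 e2 ..
    qed
    finally have cs: "card (S n) = (n*k) ^ D - (n*k - 2*r) ^ D" .
    have le: "(n*k - 2*r) ^ D \<le> (n*k) ^ D" by (simp add: power_mono)
    have "real (card (S n)) = real (n*k) ^ D - real (n*k - 2*r) ^ D"
      using le by (simp add: cs of_nat_diff)
    also have "\<dots> = real (n*k) ^ Suc (D - 1) - real (n*k - 2*r) ^ Suc (D - 1)"
      using D1 by simp
    also have "\<dots> \<le> real (Suc (D - 1)) * (real (n*k) - real (n*k - 2*r)) * real (n*k) ^ (D - 1)"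
      by (intro pow_diff_le of_nat_0_le_iff of_nat_mono diff_le_self)
    also have "\<dots> = real D * (2 * real r) * real (n*k) ^ (D - 1)"
    proof -
      have "real (2*r) \<le> real (n*k)" using that by (simp only: of_nat_le_iff)
      then have tr: "2 * real r \<le> real n * real k" by simp
      show ?thesis using D1 that tr by (simp add: of_nat_diff)
    qed
    finally show ?thesis .
  qed
  define e where "e Q n = (if Q n = {} then -\<infinity>
      else ereal (ln (real (card (Q n))) / (real (n * k)) ^ CARD('d)))"
    for Q :: "nat \<Rightarrow> ((int^'d) \<rightharpoonup> 'a) set" and n
  have ent: "coll_entropy k Q = liminf (e Q)" for Q
    unfolding coll_entropy_def e_def by simp
  have le1: "coll_entropy k C' \<le> coll_entropy k C"
    unfolding ent
  proof (rule Liminf_mono, rule always_eventually, rule allI)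
    fix n
    show "e C' n \<le> e C n"
    proof (cases "C' n = {}")
      case True then show ?thesis unfolding e_def by simp
    next
      case False
      then have ne: "C n \<noteq> {}" using subC by blast
      have "card (C' n) \<le> card (C n)" using subC finC by (intro card_mono)
      moreover have "0 < card (C' n)" using False finC subC
        by (meson card_gt_0_iff finite_subset)
      ultimately have "ln (real (card (C' n))) \<le> ln (real (card (C n)))" by simp
      then have "ln (real (card (C' n))) / (real (n * k)) ^ CARD('d)
          \<le> ln (real (card (C n))) / (real (n * k)) ^ CARD('d)"
        by (intro divide_right_mono) auto
      then show ?thesis using False ne unfolding e_def by simp
    qed
  qed
  have le2: "coll_entropy k C \<le> coll_entropy k C'"
  proof -
    have "liminf (e C) \<le> liminf (e C')"
    proof (subst le_Liminf_iff, intro allI impI)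
      fix y assume y: "y < liminf (e C)"
      have L0: "0 < liminf (e C)" using assms(4) ent by simp
      have "max y 0 < liminf (e C)" using y L0 by simp
      then obtain z1 where z1: "max y 0 < z1" "z1 < liminf (e C)" using dense by blast
      then obtain z2 where z2: "max y 0 < z2" "z2 < z1" using dense by blast
      obtain h1 where h1: "z1 = ereal h1" using z1 by (cases z1) auto
      obtain h where h: "z2 = ereal h" using z2 by (cases z2) auto
      have hpos: "0 < h" "h < h1" "y < ereal h" using z2 h h1 by auto
      have ev1: "eventually (\<lambda>n. ereal h1 < e C n) sequentially"
        using z1(2) h1 le_Liminf_iff[of "liminf (e C)" sequentially "e C"] by auto
      define \<alpha> where "\<alpha> = max 1 (real (card A))"
      define K0 where "K0 = ln (2 * (real (card G) + 1))"
      define K1 where "K1 = real D * (2 * real r) * ln \<alpha>"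
      define n0 where "n0 = nat \<lceil>(K0 + K1) / h1\<rceil> + nat \<lceil>ln 2 / (h1 - h)\<rceil> + 2 * r + 1"
      have ev2: "eventually (\<lambda>n. n0 \<le> n) sequentially" by (rule eventually_ge_at_top)
      show "eventually (\<lambda>n. y < e C' n) sequentially"
        using ev1 ev2
      proof eventually_elim
        case (elim n)
        have Cne: "C n \<noteq> {}" using elim(1) unfolding e_def by (auto split: if_splits)
        have hl: "h1 < ln (real (card (C n))) / (real (n * k)) ^ CARD('d)"
          using elim(1) Cne unfolding e_def by simp
        have nk: "n \<le> n * k" using assms(2) by simp
        define Nn where "Nn = real (n * k)"
        define T where "T = Nn ^ (D - 1)"
        have "real n0 \<le> Nn" using elim(2) nk unfolding Nn_def by linarith
        then have Nb1: "(K0 + K1) / h1 \<le> Nn" and Nb2: "ln 2 / (h1 - h) \<le> Nn"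
          and Nb3: "2 * r \<le> n * k" and Nb4: "1 \<le> Nn"
          using elim(2) nk unfolding n0_def Nn_def by linarith+
        have T1: "1 \<le> T" unfolding T_def using Nb4 by (simp add: one_le_power)
        have NT: "Nn ^ CARD('d) = Nn * T"
          unfolding T_def D_def[symmetric] using D1 by (metis Suc_diff_1 less_le_trans power_Suc zero_less_one)
        have Npos: "0 < Nn ^ CARD('d)" using Nb4 by simp
        define c where "c = real (card (C n))"
        have cpos: "0 < c" unfolding c_def using Cne finC by (simp add: card_gt_0_iff)
        have "h1 * (Nn * T) < ln c" using hl Npos NT unfolding c_def Nn_def
          by (simp add: pos_less_divide_eq)
        then have ec: "exp (h1 * (Nn * T)) < c" using cpos
          by (metis exp_less_cancel_iff exp_ln)
        define b where "b = real (card G * card A ^ card (S n))"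
        have cb: "c - b \<le> real (card (C' n))" using bad[of n] unfolding c_def b_def
          by linarith
        have apos: "0 < \<alpha>" and a1: "1 \<le> \<alpha>" unfolding \<alpha>_def by auto
        have "real (card A) ^ card (S n) \<le> \<alpha> ^ card (S n)"
          unfolding \<alpha>_def by (intro power_mono) auto
        also have "\<dots> = exp (real (card (S n)) * ln \<alpha>)"
          using apos by (simp add: exp_of_nat_mult)
        also have "\<dots> \<le> exp (K1 * T)"
        proof -
          have "real (card (S n)) * ln \<alpha> \<le> (real D * (2 * real r) * real (n*k) ^ (D - 1)) * ln \<alpha>"
            using cardS[OF Nb3] a1 by (intro mult_right_mono) auto
          then show ?thesis unfolding K1_def T_def Nn_def by (simp add: mult_ac)
        qed
        finally have Ab: "real (card A) ^ card (S n) \<le> exp (K1 * T)" .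
        have "real (card G) * real (card A) ^ card (S n) \<le> (real (card G) + 1) * exp (K1 * T)"
          using Ab by (intro mult_mono) auto
        then have "2 * (real (card G) * real (card A) ^ card (S n)) \<le> 2 * ((real (card G) + 1) * exp (K1 * T))"
          by simp
        moreover have "2 * b = 2 * (real (card G) * real (card A) ^ card (S n))" unfolding b_def by simp
        ultimately have "2 * b \<le> 2 * (real (card G) + 1) * exp (K1 * T)"
          by (simp only: mult.assoc)
        also have "\<dots> = exp (K0 + K1 * T)" unfolding K0_def by (simp add: exp_add)
        finally have b2: "2 * b \<le> exp (K0 + K1 * T)" .
        have K0: "0 \<le> K0" unfolding K0_def by simp
        have K1: "0 \<le> K1" unfolding K1_def using a1 by simp
        have ec': "exp (h * (Nn * T)) < real (card (C' n))"
          by (rule core[OF cb ec b2 K0 K1 T1 hpos(1,2) Nb1 Nb2])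
        then have c'pos: "0 < real (card (C' n))" by (smt (verit) exp_gt_zero)
        then have C'ne: "C' n \<noteq> {}" by auto
        have "h * (Nn * T) < ln (real (card (C' n)))" using ec' c'pos
          by (metis exp_less_cancel_iff exp_ln)
        then have "h < ln (real (card (C' n))) / (real (n * k)) ^ CARD('d)"
          using Npos NT unfolding Nn_def by (simp add: pos_less_divide_eq)
        then have "ereal h < e C' n" using C'ne unfolding e_def by simp
        then show ?case using hpos(3) by (meson less_trans)
      qed
    qed
    then show ?thesis unfolding ent .
  qed
  show ?thesis
  proof (intro exI conjI)
    show "\<forall>n. C' n \<subseteq> C n" using subC by blast
    show "coll_entropy k C' = coll_entropy k C" using le1 le2 by simp
    show "\<forall>n. \<forall>a\<in>C' n. \<forall>\<gamma>\<in>(cube (- int r) (int r) :: (int^'d) set) - {0}.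
               clash a (pat_shift \<gamma> a)" unfolding C'_def G_def by blast
  qed
qed

end
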